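(* Let $(X,p)$ and $(Y,d)$ be metric spaces with $(Y,d)$ separable, and let $F: X \Rightarrow Y$ be a multi-valued function whose graph is a $\Sigma^0_2$ subset of $X \times Y$. Let $P$ be the set of points of $X$ at which $F$ is strongly continuous. (a) If $Y$ is compact and $F(x)$ is closed for every $x \in X$, then $P$ is a $\Pi^0_2$ subset of $X$. (b) If $Y$ is exhaustible by compact sets and $F(x)$ is closed for every $x \in X$, then $P$ is a $\Sigma^0_3$ subset of $X$.
   Context: A multi-valued function $F: X \Rightarrow Y$ assigns to each $x$ a nonempty set $F(x)\subseteq Y$; its graph is $\{(x,y): y\in F(x)\}\subseteq X\times Y$. $F$ is strongly continuous at $x$ if for every $y \in F(x)$ and every $\varepsilon>0$ there is $\delta>0$ such that for every $x' \in B_p(x,\delta)$ there is $y' \in F(x')$ with $d(y,y')<\varepsilon$. $Y$ is exhaustible by compact sets if there are compact $K_n\subseteq Y$ with $K_n$ contained in the interior of $K_{n+1}$ and $Y=\bigcup_n K_n$. Borel hierarchy: $\Sigma^0_1$ = open; $\Sigma^0_{n+1}$ = countable unions of sets whose complements are $\Sigma^0_k$ for some $k\le n$; $\Pi^0_n$ = complements of $\Sigma^0_n$ ($\Sigma^0_2=F_\sigma$, $\Pi^0_2=G_\delta$, $\Sigma^0_3$ = countable unions of $G_\delta$ sets). *)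

theory Defs
  imports "HOL-Analysis.Analysis"
begin

inductive borel_sigma0 :: "nat \<Rightarrow> 'a::topological_space set \<Rightarrow> bool" where
  open_sigma: "open S \<Longrightarrow> borel_sigma0 1 S"
| union_sigma: "n \<ge> 1 \<Longrightarrow> (\<forall>i::nat. \<exists>k. 1 \<le> k \<and> k \<le> n \<and> borel_sigma0 k (- A i))
      \<Longrightarrow> borel_sigma0 (Suc n) (\<Union>i. A i)"

definition borel_pi0 :: "nat \<Rightarrow> 'a::topological_space set \<Rightarrow> bool" where
  "borel_pi0 n S \<longleftrightarrow> borel_sigma0 n (- S)"

definition graph_mv :: "('a \<Rightarrow> 'b set) \<Rightarrow> ('a \<times> 'b) set" where
  "graph_mv F = {(x, y). y \<in> F x}"

definition strongly_continuous_at :: "('a::metric_space \<Rightarrow> 'b::metric_space set) \<Rightarrow> 'a \<Rightarrow> bool" where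
  "strongly_continuous_at F x \<longleftrightarrow>
     (\<forall>y\<in>F x. \<forall>\<epsilon>>0. \<exists>\<delta>>0. \<forall>x'\<in>ball x \<delta>. \<exists>y'\<in>F x'. dist y y' < \<epsilon>)"

definition exhaustible_by_compacts :: "'b::topological_space itself \<Rightarrow> bool" where
  "exhaustible_by_compacts TYPE('b) \<longleftrightarrow>
     (\<exists>K :: nat \<Rightarrow> 'b set. (\<forall>n. compact (K n)) \<and> (\<forall>n. K n \<subseteq> interior (K (Suc n)))
        \<and> (\<Union>n. K n) = UNIV)"

end

theory Submission imports Defs begin

lemma bs1_open: "borel_sigma0 1 S \<Longrightarrow> open S"
  by (cases rule: borel_sigma0.cases) auto

lemma bs2_fsigma: assumes "borel_sigma0 2 S" shows "fsigma_in euclidean S"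
proof -
  have "\<exists>A. S = (\<Union>i. A i) \<and> (\<forall>i::nat. \<exists>k. 1 \<le> k \<and> k \<le> 1 \<and> borel_sigma0 k (- A i))"
    using assms by (cases rule: borel_sigma0.cases) auto
  then obtain A where A: "S = (\<Union>i. A i)" "\<forall>i::nat. \<exists>k. 1 \<le> k \<and> k \<le> 1 \<and> borel_sigma0 k (- A i)"
    by blast
  have "closed (A i)" for i
  proof -
    have "borel_sigma0 1 (- A i)" using A(2) by (metis le_antisym)
    then show ?thesis using bs1_open closed_def by blast
  qed
  then have "fsigma_in euclidean (A i)" for i by (rule closed_imp_fsigma_in[OF closed_closedin[THEN iffD1]])
  then show ?thesis unfolding A(1)
    by (intro fsigma_in_Union) auto
qed

lemma fsigma_bs2:
  assumes "fsigma_in euclidean S" shows "borel_sigma0 2 S"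
proof -
  have "\<exists>\<U>. countable \<U> \<and> \<U> \<subseteq> Collect (closedin euclidean) \<and> \<Union>\<U> = S"
    using assms unfolding fsigma_in_def union_of_def by assumption
  then obtain \<U> where U: "countable \<U>" "\<U> \<subseteq> Collect (closedin euclidean)" "\<Union>\<U> = S"
    by (elim exE conjE)
  have Ucl: "closed V" if "V \<in> \<U>" for V
  proof -
    have "V \<in> Collect (closedin euclidean)" using U(2) that by (rule subsetD)
    then show ?thesis by (simp only: mem_Collect_eq closed_closedin)
  qed
  define A where "A = (if \<U> = {} then (\<lambda>i::nat. {}) else from_nat_into \<U>)"
  have SA: "S = (\<Union>i. A i)"
    using U by (auto simp: A_def range_from_nat_into)
  have "closed (A i)" for i
  proof (cases "\<U> = {}")
    case True then show ?thesis by (simp add: A_def)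
  next
    case False
    then have "from_nat_into \<U> i \<in> \<U>" by (rule from_nat_into)
    then show ?thesis using False Ucl by (simp add: A_def)
  qed
  then have "\<forall>i. \<exists>k. 1 \<le> k \<and> k \<le> 1 \<and> borel_sigma0 k (- A i)"
    by (auto intro!: exI[of _ 1] borel_sigma0.open_sigma)
  then have "borel_sigma0 (Suc 1) (\<Union>i. A i)"
    by (intro borel_sigma0.union_sigma) auto
  then show ?thesis using SA by (simp add: numeral_2_eq_2)
qed

lemma proj_closed:
  fixes C :: "('a::topological_space \<times> 'b::topological_space) set"
  assumes "closed C" "compact K"
  shows "closed (fst ` (C \<inter> (UNIV \<times> K)))"
proof -
  have oC: "open (- C)" using assms(1) by (simp add: closed_def)
  have *: "\<exists>T. open T \<and> x0 \<in> T \<and> T \<subseteq> - fst ` (C \<inter> (UNIV \<times> K))"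
    if x0: "x0 \<notin> fst ` (C \<inter> (UNIV \<times> K))" for x0
  proof -
    have "{x0} \<times> K \<subseteq> - C"
    proof
      fix p assume p: "p \<in> {x0} \<times> K"
      show "p \<in> - C"
      proof
        assume "p \<in> C"
        then have "p \<in> C \<inter> (UNIV \<times> K)" using p by (cases p) simp
        then have "fst p \<in> fst ` (C \<inter> (UNIV \<times> K))" by (rule imageI)
        moreover have "fst p = x0" using p by (cases p) simp
        ultimately show False using x0 by simp
      qed
    qed
    then obtain X0 where X0: "x0 \<in> X0" "open X0" "X0 \<times> K \<subseteq> - C"
      using Elementary_Topology.tube_lemma[OF assms(2) oC] by blast
    have "X0 \<subseteq> - fst ` (C \<inter> (UNIV \<times> K))"
    proof
      fix x assume x: "x \<in> X0"
      show "x \<in> - fst ` (C \<inter> (UNIV \<times> K))"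
      proof
        assume "x \<in> fst ` (C \<inter> (UNIV \<times> K))"
        then obtain p where p: "p \<in> C" "snd p \<in> K" "x = fst p" by (auto simp: mem_Times_iff)
        then have "p \<in> X0 \<times> K" using x by (simp add: mem_Times_iff)
        then show False using X0(3) p(1) by blast
      qed
    qed
    then show ?thesis using X0(1,2) by blast
  qed
  have **: "\<forall>x\<in>- fst ` (C \<inter> (UNIV \<times> K)). \<exists>T. open T \<and> x \<in> T \<and> T \<subseteq> - fst ` (C \<inter> (UNIV \<times> K))"
  proof
    fix x assume "x \<in> - fst ` (C \<inter> (UNIV \<times> K))"
    then have "x \<notin> fst ` (C \<inter> (UNIV \<times> K))" by simp
    then show "\<exists>T. open T \<and> x \<in> T \<and> T \<subseteq> - fst ` (C \<inter> (UNIV \<times> K))" by (rule *)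
  qed
  have "open (- fst ` (C \<inter> (UNIV \<times> K)))"
    using open_subopen[of "- fst ` (C \<inter> (UNIV \<times> K))"] ** by (rule iffD2)
  then show ?thesis by (simp only: closed_def)
qed

lemma preimage_fsigma:
  fixes F :: "'a::metric_space \<Rightarrow> 'b::metric_space set" and K :: "nat \<Rightarrow> 'b set"
  assumes G: "fsigma_in euclidean (graph_mv F)"
    and K: "\<And>n. compact (K n)" "(\<Union>n. K n) = UNIV"
    and U: "open U"
  shows "fsigma_in euclidean {x. F x \<inter> U \<noteq> {}}"
proof -
  have "\<exists>\<C>. countable \<C> \<and> \<C> \<subseteq> Collect (closedin euclidean) \<and> \<Union>\<C> = graph_mv F"
    using G unfolding fsigma_in_def union_of_def by assumption
  then obtain \<C> where C: "countable \<C>" "\<C> \<subseteq> Collect (closedin euclidean)" "\<Union>\<C> = graph_mv F"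
    by (elim exE conjE)
  have "fsigma_in euclidean U"
    using U by (simp add: open_imp_fsigma_in metrizable_space_euclidean)
  then have "\<exists>\<E>. countable \<E> \<and> \<E> \<subseteq> Collect (closedin euclidean) \<and> \<Union>\<E> = U"
    unfolding fsigma_in_def union_of_def by assumption
  then obtain \<E> where E: "countable \<E>" "\<E> \<subseteq> Collect (closedin euclidean)" "\<Union>\<E> = U"
    by (elim exE conjE)
  define h where "h = (\<lambda>(C :: ('a \<times> 'b) set, E :: 'b set, n :: nat). fst ` (C \<inter> (UNIV \<times> (E \<inter> K n))))"
  have eq: "{x. F x \<inter> U \<noteq> {}} = \<Union> (h ` (\<C> \<times> \<E> \<times> UNIV))"
  proof (intro equalityI subsetI)
    fix x assume "x \<in> {x. F x \<inter> U \<noteq> {}}"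
    then obtain y where y: "y \<in> F x" "y \<in> U" by auto
    then obtain C where "C \<in> \<C>" "(x, y) \<in> C" using C(3) by (auto simp: graph_mv_def)
    moreover obtain E where "E \<in> \<E>" "y \<in> E" using E(3) y by auto
    moreover obtain n where "y \<in> K n" using K(2) by auto
    ultimately have "(x, y) \<in> C \<inter> (UNIV \<times> (E \<inter> K n))" "(C, E, n) \<in> \<C> \<times> \<E> \<times> UNIV" by auto
    then have "x \<in> h (C, E, n)" "(C, E, n) \<in> \<C> \<times> \<E> \<times> UNIV"
      unfolding h_def by (auto intro: image_eqI[where x="(x, y)"])
    then show "x \<in> \<Union> (h ` (\<C> \<times> \<E> \<times> UNIV))" by blast
  next
    fix x assume "x \<in> \<Union> (h ` (\<C> \<times> \<E> \<times> UNIV))"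
    then obtain q where q: "q \<in> \<C> \<times> \<E> \<times> UNIV" "x \<in> h q" by blast
    obtain C E n where qe: "q = (C, E, n)" by (cases q)
    have "x \<in> fst ` (C \<inter> (UNIV \<times> (E \<inter> K n)))" using q(2) unfolding qe h_def by simp
    then obtain p where p: "p \<in> C \<inter> (UNIV \<times> (E \<inter> K n))" "x = fst p" by (rule imageE)
    define y where "y = snd p"
    have CE: "C \<in> \<C>" "E \<in> \<E>" using q(1) unfolding qe by simp_all
    have xy: "(x, y) \<in> C" "y \<in> E" using p unfolding y_def by (auto simp: mem_Times_iff)
    have "(x, y) \<in> \<Union>\<C>" using CE(1) xy(1) by (rule UnionI)
    then have g: "(x, y) \<in> graph_mv F" using C(3) by simp
    have "y \<in> \<Union>\<E>" using CE(2) xy(2) by (rule UnionI)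
    then have "y \<in> U" using E(3) by simp
    with g show "x \<in> {x. F x \<inter> U \<noteq> {}}" by (auto simp: graph_mv_def)
  qed
  show ?thesis unfolding eq
  proof (intro fsigma_in_Union)
    show "countable (h ` (\<C> \<times> \<E> \<times> UNIV))" using C E by auto
  next
    fix S assume "S \<in> h ` (\<C> \<times> \<E> \<times> UNIV)"
    then obtain q where q: "q \<in> \<C> \<times> \<E> \<times> UNIV" "S = h q" by blast
    obtain C E n where qe: "q = (C, E, n)" by (cases q)
    have CE: "C \<in> \<C>" "E \<in> \<E>" using q(1) unfolding qe by simp_all
    have "E \<in> Collect (closedin euclidean)" using E(2) CE(2) by (rule subsetD)
    then have cE: "closed E" by (simp only: mem_Collect_eq closed_closedin)
    have "C \<in> Collect (closedin euclidean)" using C(2) CE(1) by (rule subsetD)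
    then have cC: "closed C" by (simp only: mem_Collect_eq closed_closedin)
    have "compact (K n \<inter> E)" by (rule compact_Int_closed[OF K(1) cE])
    then have cK: "compact (E \<inter> K n)" by (simp only: Int_commute)
    have "S = fst ` (C \<inter> (UNIV \<times> (E \<inter> K n)))" using q(2) unfolding qe h_def by simp
    then have "closed S" using proj_closed[OF cC cK] by simp
    then show "fsigma_in euclidean S" by (rule closed_imp_fsigma_in[OF closed_closedin[THEN iffD1]])
  qed
qed

lemma char_P:
  fixes F :: "'a::metric_space \<Rightarrow> 'b::metric_space set" and D :: "'b set"
  assumes D: "closure D = UNIV"
  shows "{x. strongly_continuous_at F x} =
    (\<Inter>p\<in>D \<times> UNIV. {x. F x \<inter> ball (fst p) (1 / Suc (snd p)) = {}}
         \<union> interior {x. F x \<inter> ball (fst p) (2 / Suc (snd p)) \<noteq> {}})"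
proof (intro equalityI subsetI)
  fix x assume "x \<in> {x. strongly_continuous_at F x}"
  then have sc: "strongly_continuous_at F x" by simp
  show "x \<in> (\<Inter>p\<in>D \<times> UNIV. {x. F x \<inter> ball (fst p) (1 / Suc (snd p)) = {}}
         \<union> interior {x. F x \<inter> ball (fst p) (2 / Suc (snd p)) \<noteq> {}})"
  proof (rule INT_I)
    fix p assume "p \<in> D \<times> (UNIV :: nat set)"
    obtain d n where p: "p = (d, n)" by (cases p)
    define r where "r = 1 / real (Suc n)"
    have r: "r > 0" by (simp add: r_def)
    have r2: "2 / real (Suc n) = r + r" by (simp add: r_def add_divide_distrib[symmetric])
    show "x \<in> {x. F x \<inter> ball (fst p) (1 / Suc (snd p)) = {}}
         \<union> interior {x. F x \<inter> ball (fst p) (2 / Suc (snd p)) \<noteq> {}}"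
    proof (cases "F x \<inter> ball d r = {}")
      case True then show ?thesis by (simp add: p r_def)
    next
      case False
      then obtain y where y: "y \<in> F x" "dist d y < r" by auto
      obtain \<delta> where \<delta>: "\<delta> > 0" "\<forall>x'\<in>ball x \<delta>. \<exists>y'\<in>F x'. dist y y' < r"
        using sc y(1) r unfolding strongly_continuous_at_def by blast
      have "ball x \<delta> \<subseteq> {x. F x \<inter> ball d (r + r) \<noteq> {}}"
      proof
        fix x' assume "x' \<in> ball x \<delta>"
        then obtain y' where y': "y' \<in> F x'" "dist y y' < r" using \<delta> by blast
        have "dist d y' \<le> dist d y + dist y y'" by (rule dist_triangle)
        then have "dist d y' < r + r" using y(2) y'(2) by linarith
        then show "x' \<in> {x. F x \<inter> ball d (r + r) \<noteq> {}}" using y'(1) by auto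
      qed
      then have "x \<in> interior {x. F x \<inter> ball d (r + r) \<noteq> {}}"
        using \<delta>(1) mem_interior by blast
      then show ?thesis unfolding p fst_conv snd_conv r2 by (rule UnI2)
    qed
  qed
next
  fix x assume H: "x \<in> (\<Inter>p\<in>D \<times> UNIV. {x. F x \<inter> ball (fst p) (1 / Suc (snd p)) = {}}
         \<union> interior {x. F x \<inter> ball (fst p) (2 / Suc (snd p)) \<noteq> {}})"
  have "strongly_continuous_at F x" unfolding strongly_continuous_at_def
  proof (intro ballI allI impI)
    fix y and \<epsilon> :: real assume y: "y \<in> F x" and e: "\<epsilon> > 0"
    have "\<epsilon> / 3 > 0" using e by simp
    then obtain n :: nat where n: "inverse (of_nat (Suc n)) < \<epsilon> / 3"
      using reals_Archimedean by blast
    define r where "r = 1 / real (Suc n)"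
    have rinv: "r = inverse (real (Suc n))" by (simp add: r_def inverse_eq_divide)
    have r: "r > 0" "3 * r < \<epsilon>" using n rinv by auto
    have r2: "2 / real (Suc n) = r + r" by (simp add: r_def add_divide_distrib[symmetric])
    have "y \<in> closure D" using D by simp
    then obtain d where d: "d \<in> D" "dist d y < r"
      using r(1) closure_approachable by metis
    have "(d, n) \<in> D \<times> (UNIV :: nat set)" using d(1) by simp
    with H have "x \<in> {x. F x \<inter> ball (fst (d, n)) (1 / Suc (snd (d, n))) = {}}
         \<union> interior {x. F x \<inter> ball (fst (d, n)) (2 / Suc (snd (d, n))) \<noteq> {}}"
      by (rule INT_D)
    then have H': "x \<in> {x. F x \<inter> ball d r = {}} \<union> interior {x. F x \<inter> ball d (r + r) \<noteq> {}}"
      unfolding fst_conv snd_conv r2 r_def .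
    have "y \<in> F x \<inter> ball d r" using y d(2) by simp
    then have "x \<notin> {x. F x \<inter> ball d r = {}}" by blast
    then have "x \<in> interior {x. F x \<inter> ball d (r + r) \<noteq> {}}" using H' by blast
    then obtain \<delta> where \<delta>: "\<delta> > 0" "ball x \<delta> \<subseteq> {x. F x \<inter> ball d (r + r) \<noteq> {}}"
      unfolding mem_interior by blast
    show "\<exists>\<delta>>0. \<forall>x'\<in>ball x \<delta>. \<exists>y'\<in>F x'. dist y y' < \<epsilon>"
    proof (intro exI conjI ballI)
      fix x' assume "x' \<in> ball x \<delta>"
      then have "x' \<in> {x. F x \<inter> ball d (r + r) \<noteq> {}}" using \<delta>(2) by blast
      then obtain y' where y'0: "y' \<in> F x'" "y' \<in> ball d (r + r)" by blast
      then have y': "y' \<in> F x'" "dist d y' < r + r" by simp_all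
      have "dist y y' \<le> dist y d + dist d y'" by (rule dist_triangle)
      moreover have "dist y d = dist d y" by (rule dist_commute)
      ultimately have "dist y y' < \<epsilon>" using d(2) y'(2) r by linarith
      then show "\<exists>y'\<in>F x'. dist y y' < \<epsilon>" using y' by blast
    qed (use \<delta> in auto)
  qed
  then show "x \<in> {x. strongly_continuous_at F x}" by simp
qed

lemma compl_P_fsigma:
  fixes F :: "'a::metric_space \<Rightarrow> 'b::metric_space set" and D :: "'b set" and K :: "nat \<Rightarrow> 'b set"
  assumes D: "countable D" "closure D = UNIV"
    and G: "fsigma_in euclidean (graph_mv F)"
    and K: "\<And>n. compact (K n)" "(\<Union>n. K n) = UNIV"
  shows "fsigma_in euclidean (- {x. strongly_continuous_at F x})"
proof -
  define h where "h = (\<lambda>p::'b \<times> nat. {x. F x \<inter> ball (fst p) (1 / Suc (snd p)) \<noteq> {}}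
         \<inter> - interior {x. F x \<inter> ball (fst p) (2 / Suc (snd p)) \<noteq> {}})"
  have eq: "- {x. strongly_continuous_at F x} = \<Union> (h ` (D \<times> UNIV))"
    unfolding char_P[OF D(2)] h_def by (simp only: Compl_INT Compl_Un Collect_neg_eq[symmetric])
  show ?thesis unfolding eq
  proof (intro fsigma_in_Union)
    show "countable (h ` (D \<times> UNIV))" using D by auto
  next
    fix S assume "S \<in> h ` (D \<times> UNIV)"
    then obtain p where S: "S = h p" by auto
    have "fsigma_in euclidean {x. F x \<inter> ball (fst p) (1 / Suc (snd p)) \<noteq> {}}"
      by (rule preimage_fsigma[OF G K]) simp
    moreover have "fsigma_in euclidean (- interior {x. F x \<inter> ball (fst p) (2 / Suc (snd p)) \<noteq> {}})"
      by (rule closed_imp_fsigma_in[OF closed_closedin[THEN iffD1]]) (rule closed_Compl, rule open_interior)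
    ultimately show "fsigma_in euclidean S" unfolding S h_def by (rule fsigma_in_Int)
  qed
qed

theorem theorem3p2:
  fixes F :: "'a::metric_space \<Rightarrow> 'b::metric_space set"
  assumes separable: "\<exists>D :: 'b set. countable D \<and> closure D = UNIV"
    and nonempty: "\<And>x. F x \<noteq> {}"
    and graph: "borel_sigma0 2 (graph_mv F)"
  shows "(compact (UNIV :: 'b set) \<and> (\<forall>x. closed (F x))
            \<longrightarrow> borel_pi0 2 {x. strongly_continuous_at F x})
       \<and> (exhaustible_by_compacts TYPE('b) \<and> (\<forall>x. closed (F x))
            \<longrightarrow> borel_sigma0 3 {x. strongly_continuous_at F x})"
proof (intro conjI impI)
  obtain D :: "'b set" where D: "countable D" "closure D = UNIV" using separable by blast
  have G: "fsigma_in euclidean (graph_mv F)" using graph by (rule bs2_fsigma)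
  {
    assume "compact (UNIV :: 'b set) \<and> (\<forall>x. closed (F x))"
    then have "fsigma_in euclidean (- {x. strongly_continuous_at F x})"
      by (intro compl_P_fsigma[OF D G, of "\<lambda>_. UNIV"]) auto
    then show "borel_pi0 2 {x. strongly_continuous_at F x}"
      unfolding borel_pi0_def by (rule fsigma_bs2)
  }
  {
    assume "exhaustible_by_compacts TYPE('b) \<and> (\<forall>x. closed (F x))"
    then obtain K :: "nat \<Rightarrow> 'b set" where K: "\<And>n. compact (K n)" "(\<Union>n. K n) = UNIV"
      unfolding exhaustible_by_compacts_def by blast
    have "borel_sigma0 2 (- {x. strongly_continuous_at F x})"
      by (rule fsigma_bs2, rule compl_P_fsigma[OF D G K])
    then have "\<forall>i::nat. \<exists>k. 1 \<le> k \<and> k \<le> 2 \<and> borel_sigma0 k (- (\<lambda>i. {x. strongly_continuous_at F x}) i)"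
      by (intro allI exI[of _ 2]) simp
    then have "borel_sigma0 (Suc 2) (\<Union>i::nat. {x. strongly_continuous_at F x})"
      by (intro borel_sigma0.union_sigma) auto
    then show "borel_sigma0 3 {x. strongly_continuous_at F x}" by (simp add: numeral_3_eq_3)
  }
qed

end
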